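(* Let $T>0$, $N=2$, $M=2$. Consider the problem of minimizing $\mathbb V(T)=\frac12(\xi_1(T)^2+\xi_2(T)^2)$ over $\alpha\in\mathcal U_2$, where $\dot\xi_i=-\xi_i+(1-\alpha_i)\bar\xi$ ($i=1,2$), $\bar\xi=\frac12(\xi_1+\xi_2)$, with initial datum satisfying $\bar\xi(0)>0$ and $\xi_1(0)>\xi_2(0)$. Let $\alpha\in\mathcal U_2$ be an optimal control whose trajectory $\xi$ satisfies $\xi_1(t)\ge\xi_2(t)$ for all $t\in[0,T]$. Define $t_0=2\ln\big(\xi_1(0)/(2\bar\xi(0))\big)$. Then: (i) If $\xi_2(0)>0$, then $(\alpha_1,\alpha_2)\equiv(1,1)$. (ii) If $\xi_2(0)\le0$ and $T\ge t_0$, then $\xi_2(T)=0$ and $\alpha_1\equiv1$; for instance the control $(\alpha_1,\alpha_2)=(1,0)$ on $[0,t_0)$ and $(1,1)$ on $[t_0,T]$ is optimal. Furthermore, if there exists $\bar t\in[0,T)$ with $\xi_2(\bar t)=0$, then $\xi_2(t)=0$ for all $t\in[\bar t,T]$. (iii) If $\xi_2(0)\le0$ and $T<t_0$, then there exists $t^*\in[0,T)$ such that $\alpha(t)=(0,0)$ for all $t\in[0,t^* )$ and $\alpha(t)=(1,0)$ for all $t\in[t^*,T]$.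
   Context: $\mathcal U_2$ is the set of measurable $\alpha:[0,T]\to[0,1]^2$ with $\alpha_1(t)+\alpha_2(t)\le2$ for all $t$. *)

theory Defs
  imports "HOL-Analysis.Analysis"
begin

text \<open>The admissible control set U_2 (M = 2): measurable maps [0,T] -> [0,1]^2
  with alpha_1 + alpha_2 <= 2.  Values outside [0,T] are irrelevant.\<close>
definition admissible :: "real \<Rightarrow> (real \<Rightarrow> real \<times> real) \<Rightarrow> bool" where
  "admissible T \<alpha> \<longleftrightarrow>
     \<alpha> \<in> borel_measurable (restrict_space lebesgue {0..T}) \<and>
     (\<forall>t\<in>{0..T}. 0 \<le> fst (\<alpha> t) \<and> fst (\<alpha> t) \<le> 1 \<and> 0 \<le> snd (\<alpha> t) \<and> snd (\<alpha> t) \<le> 1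
                 \<and> fst (\<alpha> t) + snd (\<alpha> t) \<le> 2)"

definition mean :: "real \<times> real \<Rightarrow> real" where
  "mean x = (fst x + snd x) / 2"

definition dyn :: "real \<times> real \<Rightarrow> real \<times> real \<Rightarrow> real \<times> real" where
  "dyn a x = (- fst x + (1 - fst a) * mean x, - snd x + (1 - snd a) * mean x)"

text \<open>xi is the (Caratheodory / integral-equation) solution on [0,T] with control alpha
  and initial datum x0.\<close>
definition trajectory :: "real \<Rightarrow> (real \<Rightarrow> real \<times> real) \<Rightarrow> real \<times> real \<Rightarrow> (real \<Rightarrow> real \<times> real) \<Rightarrow> bool" where
  "trajectory T \<alpha> x0 \<xi> \<longleftrightarrow> \<xi> 0 = x0 \<and>
     (\<forall>t\<in>{0..T}. ((\<lambda>s. dyn (\<alpha> s) (\<xi> s)) has_integral (\<xi> t - x0)) {0..t})"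

definition cost :: "real \<Rightarrow> (real \<Rightarrow> real \<times> real) \<Rightarrow> real" where
  "cost T \<xi> = (fst (\<xi> T) ^ 2 + snd (\<xi> T) ^ 2) / 2"

definition optimal :: "real \<Rightarrow> real \<times> real \<Rightarrow> (real \<Rightarrow> real \<times> real) \<Rightarrow> (real \<Rightarrow> real \<times> real) \<Rightarrow> bool" where
  "optimal T x0 \<alpha> \<xi> \<longleftrightarrow> admissible T \<alpha> \<and> trajectory T \<alpha> x0 \<xi> \<and>
     (\<forall>\<beta> \<eta>. admissible T \<beta> \<longrightarrow> trajectory T \<beta> x0 \<eta> \<longrightarrow> cost T \<xi> \<le> cost T \<eta>)"

end

theory Submission
  imports Defs
begin


lemma has_integral_sub_interval:
  fixes f :: "real \<Rightarrow> 'a::banach"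
  assumes "\<And>t. t \<in> {a..b} \<Longrightarrow> (f has_integral (F t - F a)) {a..t}"
    and "a \<le> t" "t \<le> x" "x \<le> b"
  shows "(f has_integral (F x - F t)) {t..x}"
proof -
  have fx: "(f has_integral (F x - F a)) {a..x}" using assms by auto
  have ft: "(f has_integral (F t - F a)) {a..t}" using assms by auto
  have fi: "f integrable_on {t..x}"
    using integrable_subinterval_real[OF has_integral_integrable[OF fx], of t x] assms by auto
  have "integral {a..t} f + integral {t..x} f = integral {a..x} f"
    using Henstock_Kurzweil_Integration.integral_combine[OF assms(2) assms(3) has_integral_integrable[OF fx]] .
  then have "integral {t..x} f = F x - F t"
    using integral_unique[OF fx] integral_unique[OF ft] by (simp add: algebra_simps)
  then show ?thesis using fi by (metis has_integral_integrable_integral)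
qed

lemma prod_rule:
  fixes y f c c' :: "real \<Rightarrow> real"
  assumes ab: "a \<le> b"
    and yint: "\<And>t. t \<in> {a..b} \<Longrightarrow> (f has_integral (y t - y a)) {a..t}"
    and fb: "\<And>s. s \<in> {a..b} \<Longrightarrow> \<bar>f s\<bar> \<le> B"
    and cd: "\<And>s. s \<in> {a..b} \<Longrightarrow> (c has_real_derivative c' s) (at s)"
    and cc: "continuous_on {a..b} c'"
  shows "((\<lambda>s. c' s * y s + c s * f s) has_integral (c b * y b - c a * y a)) {a..b}"
proof -
  have fi: "f integrable_on {a..b}" using yint[of b] ab by auto
  have yeq: "\<And>t. t \<in> {a..b} \<Longrightarrow> y t = y a + integral {a..t} f"
    using yint by (metis add_diff_cancel_left' diff_add_cancel integral_unique)
  have ycont: "continuous_on {a..b} y"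
    using continuous_on_eq[OF continuous_on_add[OF continuous_on_const indefinite_integral_continuous_1[OF fi]]] yeq
    by (metis (no_types, lifting))
  have ccont: "continuous_on {a..b} c"
    using cd by (meson DERIV_isCont continuous_at_imp_continuous_on)
  have i1: "(\<lambda>s. c' s * y s) integrable_on {a..b}"
    by (intro integrable_continuous_real continuous_on_mult cc ycont)
  have fabs: "f absolutely_integrable_on {a..b}"
    by (rule absolutely_integrable_integrable_bound[where g="\<lambda>_. B"]) (use fb fi in auto)
  have i2: "(\<lambda>s. c s * f s) integrable_on {a..b}"
  proof -
    have "(\<lambda>s. c s * f s) absolutely_integrable_on {a..b}"
      by (rule absolutely_integrable_bounded_measurable_product_real)
        (auto intro!: continuous_imp_measurable_on_sets_lebesgue ccont fabs compact_imp_bounded compact_continuous_image)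
    then show ?thesis using set_lebesgue_integral_eq_integral(1) by blast
  qed
  define g where "g = (\<lambda>s. c' s * y s + c s * f s)"
  have gi: "g integrable_on {a..b}" unfolding g_def using i1 i2 by (rule integrable_add)
  have B0: "0 \<le> B" using fb[of a] ab by auto
  obtain L where L: "\<And>s. s \<in> {a..b} \<Longrightarrow> \<bar>c' s\<bar> \<le> L"
    using compact_continuous_image[OF cc compact_Icc] compact_imp_bounded bounded_real
    by (metis image_eqI)
  have L0: "0 \<le> L" using L[of a] ab by auto
  define E where "E = (\<lambda>s. c s * y s - integral {a..s} g)"
  have cint: "(c' has_integral (c x - c t)) {t..x}" if "a \<le> t" "t \<le> x" "x \<le> b" for t x
  proof (rule fundamental_theorem_of_calculus)
    fix s assume "s \<in> {t..x}"
    then have cs: "(c has_real_derivative c' s) (at s)" using cd that by auto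
    show "(c has_vector_derivative c' s) (at s within {t..x})"
      using has_field_derivative_at_within[OF cs, of "{t..x}"] by (simp add: has_real_derivative_iff_has_vector_derivative)
  qed (use that in auto)
  have gint: "(g has_integral (integral {a..x} g - integral {a..t} g)) {t..x}"
    if "a \<le> t" "t \<le> x" "x \<le> b" for t x
  proof (rule has_integral_sub_interval[where F="\<lambda>s. integral {a..s} g" and b=b])
    show "(g has_integral (integral {a..s} g - integral {a..a} g)) {a..s}" if "s \<in> {a..b}" for s
      using integrable_subinterval_real[OF gi, of a s] that by (simp add: integrable_integral)
  qed (use that in auto)
  have quad: "\<bar>E x - E t\<bar> \<le> 2 * L * B * (x - t) ^ 2" if tx: "a \<le> t" "t \<le> x" "x \<le> b" for t x
  proof -
    have yx: "(f has_integral (y x - y t)) {t..x}"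
      by (rule has_integral_sub_interval[where b=b]) (use yint tx in auto)
    define h where "h = (\<lambda>s. (c x - c s) * f s + c' s * (y t - y s))"
    have "((\<lambda>s. c x * f s + y t * c' s - g s) has_integral
           (c x * (y x - y t) + y t * (c x - c t) - (integral {a..x} g - integral {a..t} g))) {t..x}"
      by (intro has_integral_diff has_integral_add has_integral_mult_right yx cint gint tx)
    then have "(h has_integral (c x * (y x - y t) + y t * (c x - c t) - (integral {a..x} g - integral {a..t} g))) {t..x}"
      by (rule has_integral_eq[rotated]) (auto simp: h_def g_def algebra_simps)
    moreover have "c x * (y x - y t) + y t * (c x - c t) - (integral {a..x} g - integral {a..t} g) = E x - E t"
      by (simp add: E_def algebra_simps)
    ultimately have hi: "(h has_integral (E x - E t)) {t..x}" by simp
    have "\<bar>h s\<bar> \<le> 2 * L * B * (x - t)" if s: "s \<in> {t..x}" for s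
    proof -
      have "norm (c x - c s) \<le> L * Henstock_Kurzweil_Integration.content (cbox s x)"
        by (rule has_integral_bound[OF L0, of c']) (use cint[of s x] tx s L in auto)
      then have c1: "\<bar>c x - c s\<bar> \<le> L * (x - t)"
        using s L0 mult_left_mono[of "x - s" "x - t" L] by auto
      have yts: "(f has_integral (y s - y t)) {t..s}"
        by (rule has_integral_sub_interval[where b=b]) (use yint tx s in auto)
      have "norm (y s - y t) \<le> B * Henstock_Kurzweil_Integration.content (cbox t s)"
        by (rule has_integral_bound[OF B0, of f]) (use yts tx s fb in auto)
      then have c2: "\<bar>y t - y s\<bar> \<le> B * (x - t)"
        using s B0 mult_left_mono[of "s - t" "x - t" B] by (auto simp: abs_minus_commute)
      have f1: "\<bar>f s\<bar> \<le> B" using fb s tx by auto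
      have f2: "\<bar>c' s\<bar> \<le> L" using L s tx by auto
      have "\<bar>h s\<bar> \<le> \<bar>c x - c s\<bar> * \<bar>f s\<bar> + \<bar>c' s\<bar> * \<bar>y t - y s\<bar>"
        unfolding h_def by (metis abs_mult abs_triangle_ineq)
      also have "\<dots> \<le> (L * (x - t)) * B + L * (B * (x - t))"
        by (intro add_mono mult_mono c1 c2 f1 f2) (use L0 B0 tx in auto)
      finally show ?thesis by (simp add: algebra_simps)
    qed
    then have "norm (E x - E t) \<le> (2 * L * B * (x - t)) * Henstock_Kurzweil_Integration.content (cbox t x)"
      by (intro has_integral_bound[OF _ ]) (use hi L0 B0 tx in auto)
    then show ?thesis using tx by (simp add: power2_eq_square mult.assoc)
  qed
  have quad2: "\<bar>E z - E t\<bar> \<le> 2 * L * B * \<bar>z - t\<bar> * \<bar>z - t\<bar>" if "z \<in> {a..b}" "t \<in> {a..b}" for z t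
  proof (cases "t \<le> z")
    case True then show ?thesis using quad[of t z] that by (simp add: power2_eq_square mult.assoc)
  next
    case False then show ?thesis using quad[of z t] that
      by (simp add: power2_eq_square mult.assoc abs_minus_commute)
  qed
  have der: "(E has_real_derivative 0) (at t within {a..b})" if t: "t \<in> {a..b}" for t
    unfolding has_field_derivative_iff
  proof (rule Lim_null_comparison)
    show "\<forall>\<^sub>F z in at t within {a..b}. norm ((E z - E t) / (z - t)) \<le> 2 * L * B * \<bar>z - t\<bar>"
      unfolding eventually_at_filter
    proof (intro always_eventually allI impI)
      fix z assume z: "z \<noteq> t" "z \<in> {a..b}"
      have "\<bar>E z - E t\<bar> / \<bar>z - t\<bar> \<le> 2 * L * B * \<bar>z - t\<bar>"
        using quad2[OF z(2) t] z by (simp add: divide_le_eq)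
      then show "norm ((E z - E t) / (z - t)) \<le> 2 * L * B * \<bar>z - t\<bar>" by simp
    qed
    have "((\<lambda>z. 2 * L * B * \<bar>z - t\<bar>) \<longlongrightarrow> 2 * L * B * \<bar>t - t\<bar>) (at t within {a..b})"
      by (intro tendsto_intros)
    then show "((\<lambda>z. 2 * L * B * \<bar>z - t\<bar>) \<longlongrightarrow> 0) (at t within {a..b})" by simp
  qed
  obtain k where "\<forall>x\<in>{a..b}. E x = k"
    using has_field_derivative_zero_constant[of "{a..b}" E] der by auto
  then have "E b = E a" using ab by auto
  then have "integral {a..b} g = c b * y b - c a * y a" by (simp add: E_def)
  then show ?thesis using gi unfolding g_def by (metis has_integral_integrable_integral)
qed




lemma traj_basic:
  assumes adm: "admissible T \<beta>" and tr: "trajectory T \<beta> x0 \<eta>" and T: "0 \<le> T"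
  shows "continuous_on {0..T} \<eta>"
    and "\<And>u t. 0 \<le> u \<Longrightarrow> u \<le> t \<Longrightarrow> t \<le> T \<Longrightarrow>
           ((\<lambda>s. dyn (\<beta> s) (\<eta> s)) has_integral (\<eta> t - \<eta> u)) {u..t}"
    and "\<exists>K. \<forall>s\<in>{0..T}. \<bar>fst (\<eta> s)\<bar> \<le> K \<and> \<bar>snd (\<eta> s)\<bar> \<le> K"
proof -
  have e0: "\<eta> 0 = x0" and hi: "\<And>t. t \<in> {0..T} \<Longrightarrow> ((\<lambda>s. dyn (\<beta> s) (\<eta> s)) has_integral (\<eta> t - x0)) {0..t}"
    using tr unfolding trajectory_def by auto
  have hi': "\<And>t. t \<in> {0..T} \<Longrightarrow> ((\<lambda>s. dyn (\<beta> s) (\<eta> s)) has_integral (\<eta> t - \<eta> 0)) {0..t}"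
    using hi e0 by simp
  have fi: "(\<lambda>s. dyn (\<beta> s) (\<eta> s)) integrable_on {0..T}" using hi[of T] T by auto
  have eq: "\<And>t. t \<in> {0..T} \<Longrightarrow> \<eta> t = x0 + integral {0..t} (\<lambda>s. dyn (\<beta> s) (\<eta> s))"
    using hi by (metis add.commute diff_add_cancel integral_unique)
  show cont: "continuous_on {0..T} \<eta>"
    using continuous_on_eq[OF continuous_on_add[OF continuous_on_const indefinite_integral_continuous_1[OF fi]]] eq
    by (metis (no_types, lifting))
  show "((\<lambda>s. dyn (\<beta> s) (\<eta> s)) has_integral (\<eta> t - \<eta> u)) {u..t}"
    if "0 \<le> u" "u \<le> t" "t \<le> T" for u t
    by (rule has_integral_sub_interval[where b=T, OF hi']) (use that in auto)
  have "bounded (\<eta> ` {0..T})" by (intro compact_imp_bounded compact_continuous_image cont compact_Icc)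
  then obtain K where "\<forall>x\<in>\<eta> ` {0..T}. norm x \<le> K" unfolding bounded_iff by blast
  then have K: "\<And>s. s \<in> {0..T} \<Longrightarrow> norm (\<eta> s) \<le> K" by auto
  show "\<exists>K. \<forall>s\<in>{0..T}. \<bar>fst (\<eta> s)\<bar> \<le> K \<and> \<bar>snd (\<eta> s)\<bar> \<le> K"
  proof (intro exI ballI conjI)
    fix s assume s: "s \<in> {0..T}"
    show "\<bar>fst (\<eta> s)\<bar> \<le> K" using K[OF s] norm_fst_le[of "fst (\<eta> s)" "snd (\<eta> s)"] by auto
    show "\<bar>snd (\<eta> s)\<bar> \<le> K" using K[OF s] norm_snd_le[of "snd (\<eta> s)" "fst (\<eta> s)"] by auto
  qed
qed

lemma traj_lin:
  assumes adm: "admissible T \<beta>" and tr: "trajectory T \<beta> x0 \<eta>" and T: "0 \<le> T"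
  shows "\<And>u t. 0 \<le> u \<Longrightarrow> u \<le> t \<Longrightarrow> t \<le> T \<Longrightarrow>
           ((\<lambda>s. p * fst (dyn (\<beta> s) (\<eta> s)) + q * snd (dyn (\<beta> s) (\<eta> s))) has_integral
              ((p * fst (\<eta> t) + q * snd (\<eta> t)) - (p * fst (\<eta> u) + q * snd (\<eta> u)))) {u..t}"
    and "\<exists>B. \<forall>s\<in>{0..T}. \<bar>p * fst (dyn (\<beta> s) (\<eta> s)) + q * snd (dyn (\<beta> s) (\<eta> s))\<bar> \<le> B"
proof -
  show "((\<lambda>s. p * fst (dyn (\<beta> s) (\<eta> s)) + q * snd (dyn (\<beta> s) (\<eta> s))) has_integral
              ((p * fst (\<eta> t) + q * snd (\<eta> t)) - (p * fst (\<eta> u) + q * snd (\<eta> u)))) {u..t}"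
    if "0 \<le> u" "u \<le> t" "t \<le> T" for u t
  proof -
    have h: "((\<lambda>s. dyn (\<beta> s) (\<eta> s)) has_integral (\<eta> t - \<eta> u)) {u..t}"
      using traj_basic(2)[OF adm tr T that] .
    have "(((\<lambda>x. p * fst x + q * snd x) \<circ> (\<lambda>s. dyn (\<beta> s) (\<eta> s))) has_integral
             (\<lambda>x. p * fst x + q * snd x) (\<eta> t - \<eta> u)) {u..t}"
      by (rule has_integral_linear[OF h]) (intro bounded_linear_intros)
    then show ?thesis by (simp add: o_def algebra_simps)
  qed
  obtain K where K: "\<And>s. s \<in> {0..T} \<Longrightarrow> \<bar>fst (\<eta> s)\<bar> \<le> K \<and> \<bar>snd (\<eta> s)\<bar> \<le> K"
    using traj_basic(3)[OF adm tr T] by blast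
  have ab: "\<And>s. s \<in> {0..T} \<Longrightarrow> 0 \<le> fst (\<beta> s) \<and> fst (\<beta> s) \<le> 1 \<and> 0 \<le> snd (\<beta> s) \<and> snd (\<beta> s) \<le> 1"
    using adm unfolding admissible_def by auto
  have mb: "\<bar>(1 - a) * mean x\<bar> \<le> K" if "0 \<le> a" "a \<le> 1" "\<bar>fst x\<bar> \<le> K" "\<bar>snd x\<bar> \<le> K" for a x
  proof -
    have "\<bar>mean x\<bar> \<le> K" using that unfolding mean_def by auto
    moreover have "\<bar>1 - a\<bar> \<le> 1" using that by auto
    ultimately show ?thesis unfolding abs_mult
      by (meson abs_ge_zero dual_order.trans mult_left_le_one_le)
  qed
  show "\<exists>B. \<forall>s\<in>{0..T}. \<bar>p * fst (dyn (\<beta> s) (\<eta> s)) + q * snd (dyn (\<beta> s) (\<eta> s))\<bar> \<le> B"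
  proof (intro exI ballI)
    fix s assume s: "s \<in> {0..T}"
    have f1: "\<bar>fst (dyn (\<beta> s) (\<eta> s))\<bar> \<le> 2 * K"
      using mb[of "fst (\<beta> s)" "\<eta> s"] K[OF s] ab[OF s] unfolding dyn_def by auto
    have f2: "\<bar>snd (dyn (\<beta> s) (\<eta> s))\<bar> \<le> 2 * K"
      using mb[of "snd (\<beta> s)" "\<eta> s"] K[OF s] ab[OF s] unfolding dyn_def by auto
    have "\<bar>p * fst (dyn (\<beta> s) (\<eta> s)) + q * snd (dyn (\<beta> s) (\<eta> s))\<bar>
        \<le> \<bar>p\<bar> * \<bar>fst (dyn (\<beta> s) (\<eta> s))\<bar> + \<bar>q\<bar> * \<bar>snd (dyn (\<beta> s) (\<eta> s))\<bar>"
      by (metis abs_mult abs_triangle_ineq)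
    also have "\<dots> \<le> \<bar>p\<bar> * (2 * K) + \<bar>q\<bar> * (2 * K)"
      by (intro add_mono mult_left_mono f1 f2) auto
    finally show "\<bar>p * fst (dyn (\<beta> s) (\<eta> s)) + q * snd (dyn (\<beta> s) (\<eta> s))\<bar> \<le> \<bar>p\<bar> * (2 * K) + \<bar>q\<bar> * (2 * K)" .
  qed
qed

lemma traj_prod:
  assumes adm: "admissible T \<beta>" and tr: "trajectory T \<beta> x0 \<eta>"
    and ut: "0 \<le> u" "u \<le> t" "t \<le> T"
    and cd: "\<And>s. s \<in> {u..t} \<Longrightarrow> (c has_real_derivative c' s) (at s)"
    and cc: "continuous_on {u..t} c'"
  shows "((\<lambda>s. c' s * (p * fst (\<eta> s) + q * snd (\<eta> s)) + c s * (p * fst (dyn (\<beta> s) (\<eta> s)) + q * snd (dyn (\<beta> s) (\<eta> s))))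
     has_integral (c t * (p * fst (\<eta> t) + q * snd (\<eta> t)) - c u * (p * fst (\<eta> u) + q * snd (\<eta> u)))) {u..t}"
proof -
  have T: "0 \<le> T" using ut by auto
  obtain B where B: "\<And>s. s \<in> {0..T} \<Longrightarrow> \<bar>p * fst (dyn (\<beta> s) (\<eta> s)) + q * snd (dyn (\<beta> s) (\<eta> s))\<bar> \<le> B"
    using traj_lin(2)[OF adm tr T] by blast
  show ?thesis
  proof (rule prod_rule[where y="\<lambda>s. p * fst (\<eta> s) + q * snd (\<eta> s)" and B=B, OF ut(2) _ _ cd cc])
    show "((\<lambda>s. p * fst (dyn (\<beta> s) (\<eta> s)) + q * snd (dyn (\<beta> s) (\<eta> s))) has_integral
           (p * fst (\<eta> x) + q * snd (\<eta> x) - (p * fst (\<eta> u) + q * snd (\<eta> u)))) {u..x}" if "x \<in> {u..t}" for x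
      using traj_lin(1)[OF adm tr T, of u x] that ut by auto
    show "\<bar>p * fst (dyn (\<beta> s) (\<eta> s)) + q * snd (dyn (\<beta> s) (\<eta> s))\<bar> \<le> B" if "s \<in> {u..t}" for s
      using B that ut by auto
  qed auto
qed




lemma hi_eq:
  assumes "(f has_integral k) S" "\<And>x. x \<in> S \<Longrightarrow> f x = g x" "k = k'"
  shows "(g has_integral k') S"
  using has_integral_eq[of S f g k] assms by auto

lemma first_pos:
  fixes g :: "real \<Rightarrow> real"
  assumes cont: "continuous_on {0..T} g" and g0: "g 0 > 0"
    and step: "\<And>t. t \<in> {0..T} \<Longrightarrow> (\<forall>s\<in>{0..t}. g s \<ge> 0) \<Longrightarrow> g t > 0"
    and t: "t \<in> {0..T}"
  shows "g t > 0"
proof (rule ccontr)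
  assume nt: "\<not> g t > 0"
  define Z where "Z = {0..T} \<inter> g -` {..0}"
  have cZ: "closed Z" unfolding Z_def by (intro continuous_closed_preimage cont) auto
  have tZ: "t \<in> Z" using t nt unfolding Z_def by auto
  have bZ: "bdd_below Z" unfolding Z_def by (auto intro: bdd_belowI[where m=0])
  define a where "a = Inf Z"
  have aZ: "a \<in> Z" unfolding a_def using closed_contains_Inf[OF _ bZ cZ] tZ by auto
  have low: "\<And>s. s \<in> Z \<Longrightarrow> a \<le> s" unfolding a_def using bZ by (simp add: cInf_lower)
  have a0: "0 \<le> a" "a \<le> T" "g a \<le> 0" using aZ unfolding Z_def by auto
  have "\<exists>x. 0 \<le> x \<and> x \<le> a \<and> g x = 0"
    by (rule IVT2') (use a0 g0 continuous_on_subset[OF cont, of "{0..a}"] in auto)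
  then obtain x where x: "0 \<le> x" "x \<le> a" "g x = 0" by blast
  have "x \<in> Z" using x a0 unfolding Z_def by auto
  then have "x = a" using low x by force
  have "\<forall>s\<in>{0..a}. g s \<ge> 0"
  proof
    fix s assume s: "s \<in> {0..a}"
    show "g s \<ge> 0"
    proof (cases "s = a")
      case True then show ?thesis using x \<open>x = a\<close> by simp
    next
      case False
      then have "s < a" using s by auto
      then have "s \<notin> Z" using low by force
      then show ?thesis using s a0 unfolding Z_def by auto
    qed
  qed
  then have "g a > 0" using step[of a] a0 by auto
  then show False using a0 by auto
qed

lemma traj_vc1:
  assumes adm: "admissible T \<beta>" and tr: "trajectory T \<beta> x0 \<eta>"
    and ut: "0 \<le> u" "u \<le> t" "t \<le> T"
  shows "((\<lambda>s. exp s * ((1 - fst (\<beta> s)) * mean (\<eta> s))) has_integral (exp t * fst (\<eta> t) - exp u * fst (\<eta> u))) {u..t}"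
proof -
  have "((\<lambda>s. exp s * (1 * fst (\<eta> s) + 0 * snd (\<eta> s)) + exp s * (1 * fst (dyn (\<beta> s) (\<eta> s)) + 0 * snd (dyn (\<beta> s) (\<eta> s))))
     has_integral (exp t * (1 * fst (\<eta> t) + 0 * snd (\<eta> t)) - exp u * (1 * fst (\<eta> u) + 0 * snd (\<eta> u)))) {u..t}"
    by (rule traj_prod[OF adm tr ut]) (auto intro!: DERIV_exp continuous_intros)
  then show ?thesis by (rule hi_eq) (simp_all add: dyn_def mean_def field_simps)
qed

lemma traj_vc2:
  assumes adm: "admissible T \<beta>" and tr: "trajectory T \<beta> x0 \<eta>"
    and ut: "0 \<le> u" "u \<le> t" "t \<le> T"
  shows "((\<lambda>s. exp s * ((1 - snd (\<beta> s)) * mean (\<eta> s))) has_integral (exp t * snd (\<eta> t) - exp u * snd (\<eta> u))) {u..t}"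
proof -
  have "((\<lambda>s. exp s * (0 * fst (\<eta> s) + 1 * snd (\<eta> s)) + exp s * (0 * fst (dyn (\<beta> s) (\<eta> s)) + 1 * snd (dyn (\<beta> s) (\<eta> s))))
     has_integral (exp t * (0 * fst (\<eta> t) + 1 * snd (\<eta> t)) - exp u * (0 * fst (\<eta> u) + 1 * snd (\<eta> u)))) {u..t}"
    by (rule traj_prod[OF adm tr ut]) (auto intro!: DERIV_exp continuous_intros)
  then show ?thesis by (rule hi_eq) (simp_all add: dyn_def mean_def field_simps)
qed

lemma traj_vcm:
  assumes adm: "admissible T \<beta>" and tr: "trajectory T \<beta> x0 \<eta>"
    and ut: "0 \<le> u" "u \<le> t" "t \<le> T"
  shows "((\<lambda>s. exp s * ((1 - (fst (\<beta> s) + snd (\<beta> s)) / 2) * mean (\<eta> s))) has_integral (exp t * mean (\<eta> t) - exp u * mean (\<eta> u))) {u..t}"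
proof -
  have "((\<lambda>s. exp s * (1/2 * fst (\<eta> s) + 1/2 * snd (\<eta> s)) + exp s * (1/2 * fst (dyn (\<beta> s) (\<eta> s)) + 1/2 * snd (dyn (\<beta> s) (\<eta> s))))
     has_integral (exp t * (1/2 * fst (\<eta> t) + 1/2 * snd (\<eta> t)) - exp u * (1/2 * fst (\<eta> u) + 1/2 * snd (\<eta> u)))) {u..t}"
    by (rule traj_prod[OF adm tr ut]) (auto intro!: DERIV_exp continuous_intros)
  then show ?thesis by (rule hi_eq) (simp_all add: dyn_def mean_def field_simps)
qed

lemma traj_m:
  assumes adm: "admissible T \<beta>" and tr: "trajectory T \<beta> x0 \<eta>"
    and ut: "0 \<le> u" "u \<le> t" "t \<le> T"
  shows "((\<lambda>s. - ((fst (\<beta> s) + snd (\<beta> s)) / 2 * mean (\<eta> s))) has_integral (mean (\<eta> t) - mean (\<eta> u))) {u..t}"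
proof -
  have T: "0 \<le> T" using ut by auto
  have "((\<lambda>s. 1/2 * fst (dyn (\<beta> s) (\<eta> s)) + 1/2 * snd (dyn (\<beta> s) (\<eta> s))) has_integral
              ((1/2 * fst (\<eta> t) + 1/2 * snd (\<eta> t)) - (1/2 * fst (\<eta> u) + 1/2 * snd (\<eta> u)))) {u..t}"
    by (rule traj_lin(1)[OF adm tr T ut])
  then show ?thesis by (rule hi_eq) (simp_all add: dyn_def mean_def field_simps)
qed

lemma adm_bounds:
  assumes "admissible T \<beta>" "s \<in> {0..T}"
  shows "0 \<le> fst (\<beta> s)" "fst (\<beta> s) \<le> 1" "0 \<le> snd (\<beta> s)" "snd (\<beta> s) \<le> 1"
  using assms unfolding admissible_def by auto

lemma traj_mean_pos:
  assumes adm: "admissible T \<beta>" and tr: "trajectory T \<beta> x0 \<eta>" and T: "0 \<le> T"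
    and m0: "mean x0 > 0" and t: "t \<in> {0..T}"
  shows "mean (\<eta> t) > 0"
proof (rule first_pos[where g="\<lambda>s. mean (\<eta> s)" and T=T, OF _ _ _ t])
  show "continuous_on {0..T} (\<lambda>s. mean (\<eta> s))"
    unfolding mean_def by (intro continuous_intros traj_basic(1)[OF adm tr T]) auto
  show "0 < mean (\<eta> 0)" using tr m0 unfolding trajectory_def by auto
  fix t assume t: "t \<in> {0..T}" and nn: "\<forall>s\<in>{0..t}. 0 \<le> mean (\<eta> s)"
  have hi: "((\<lambda>s. exp s * ((1 - (fst (\<beta> s) + snd (\<beta> s)) / 2) * mean (\<eta> s))) has_integral (exp t * mean (\<eta> t) - exp 0 * mean (\<eta> 0))) {0..t}"
    using traj_vcm[OF adm tr, of 0 t] t by auto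
  have "0 \<le> exp t * mean (\<eta> t) - exp 0 * mean (\<eta> 0)"
  proof (rule has_integral_nonneg[OF hi])
    fix s assume s: "s \<in> {0..t}"
    then have "s \<in> {0..T}" using t by auto
    then show "0 \<le> exp s * ((1 - (fst (\<beta> s) + snd (\<beta> s)) / 2) * mean (\<eta> s))"
      using adm_bounds[OF adm \<open>s \<in> {0..T}\<close>] nn s by (intro mult_nonneg_nonneg) auto
  qed
  moreover have "mean (\<eta> 0) > 0" using tr m0 unfolding trajectory_def by auto
  ultimately have "exp t * mean (\<eta> t) > 0" by simp
  then show "mean (\<eta> t) > 0" by (simp add: zero_less_mult_iff)
qed

lemma traj_mean_le:
  assumes adm: "admissible T \<beta>" and tr: "trajectory T \<beta> x0 \<eta>"
    and m0: "mean x0 > 0" and ut: "0 \<le> u" "u \<le> t" "t \<le> T"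
  shows "mean (\<eta> t) \<le> mean (\<eta> u)"
proof -
  have "0 \<le> -(mean (\<eta> t) - mean (\<eta> u))"
  proof (rule has_integral_nonneg[OF has_integral_neg[OF traj_m[OF adm tr ut]]])
    fix s assume s: "s \<in> {u..t}"
    then have s': "s \<in> {0..T}" using ut by auto
    show "0 \<le> - (- ((fst (\<beta> s) + snd (\<beta> s)) / 2 * mean (\<eta> s)))"
      using adm_bounds[OF adm s'] traj_mean_pos[OF adm tr _ m0 s'] ut
      by (simp add: less_imp_le)
  qed
  then show ?thesis by simp
qed

lemma traj_fst_lower:
  assumes adm: "admissible T \<beta>" and tr: "trajectory T \<beta> x0 \<eta>"
    and m0: "mean x0 > 0" and t: "t \<in> {0..T}"
  shows "exp t * fst (\<eta> t) \<ge> fst x0" "exp t * snd (\<eta> t) \<ge> snd x0"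
proof -
  have e0: "\<eta> 0 = x0" using tr unfolding trajectory_def by auto
  have T: "0 \<le> T" using t by auto
  have nn: "s \<in> {0..t} \<Longrightarrow> 0 \<le> exp s * ((1 - fst (\<beta> s)) * mean (\<eta> s)) \<and> 0 \<le> exp s * ((1 - snd (\<beta> s)) * mean (\<eta> s))" for s
    using adm_bounds[OF adm, of s] traj_mean_pos[OF adm tr T m0, of s] t
    by (auto intro!: mult_nonneg_nonneg simp: less_imp_le)
  show "exp t * fst (\<eta> t) \<ge> fst x0"
    using has_integral_nonneg[OF traj_vc1[OF adm tr, of 0 t]] nn t e0 by auto
  show "exp t * snd (\<eta> t) \<ge> snd x0"
    using has_integral_nonneg[OF traj_vc2[OF adm tr, of 0 t]] nn t e0 by auto
qed




lemma nonneg_zero_ae: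
  fixes g :: "real \<Rightarrow> real"
  assumes int: "(g has_integral 0) {a..b}" and nonneg: "\<And>x. x \<in> {a..b} \<Longrightarrow> g x \<ge> 0"
  shows "AE x in lebesgue. x \<in> {a..b} \<longrightarrow> g x = 0"
proof -
  have af: "g absolutely_integrable_on {a..b}"
    by (rule nonnegative_absolutely_integrable_1[OF has_integral_integrable[OF int] nonneg])
  have "0 = integral {a..b} g" using int by (simp add: integral_unique)
  also have "\<dots> = set_lebesgue_integral lebesgue {a..b} g"
    by (intro set_lebesgue_integral_eq_integral(2)[symmetric] af)
  finally have z: "set_lebesgue_integral lebesgue {a..b} g = 0" by simp
  have "(AE x in lebesgue. indicator {a..b} x *\<^sub>R g x = 0)"
    using z unfolding set_lebesgue_integral_def
    by (subst (asm) integral_nonneg_eq_0_iff_AE)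
      (use af nonneg in \<open>auto simp: set_integrable_def indicator_def\<close>)
  then show ?thesis by eventually_elim (auto simp: indicator_def)
qed

lemma has_integral_ae_eq:
  fixes f g :: "real \<Rightarrow> real"
  assumes "(f has_integral i) {a..b}" "AE x in lebesgue. x \<in> {a..b} \<longrightarrow> f x = g x"
  shows "(g has_integral i) {a..b}"
proof -
  obtain N where N: "{x \<in> space lebesgue. \<not> (x \<in> {a..b} \<longrightarrow> f x = g x)} \<subseteq> N" "emeasure lebesgue N = 0" "N \<in> sets lebesgue"
    using AE_E[OF assms(2)] by blast
  have "negligible N" using N by (simp add: negligible_iff_null_sets null_sets_def)
  then show ?thesis
    by (rule has_integral_spike[OF _ _ assms(1)]) (use N in auto)
qed

lemma AE_neq: "AE x in lebesgue. (x::real) \<noteq> c"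
  by (rule AE_I'[of "{c}"]) (auto simp: negligible_iff_null_sets[symmetric])

lemma adm_step:
  assumes "0 \<le> fst A" "fst A \<le> 1" "0 \<le> snd A" "snd A \<le> 1"
    "0 \<le> fst B" "fst B \<le> 1" "0 \<le> snd B" "snd B \<le> 1"
  shows "admissible T (\<lambda>t. if t < c then A else B)"
  unfolding admissible_def
proof (intro conjI)
  show "(\<lambda>t. if t < c then A else B) \<in> borel_measurable (restrict_space lebesgue {0..T})"
    apply measurable
    by (auto intro!: continuous_imp_measurable_on_sets_lebesgue continuous_intros)
qed (use assms in auto)




lemma traj_from_deriv:
  assumes e0: "\<eta> 0 = x0" and cont: "continuous_on {0..T} \<eta>" and S: "finite S"
    and der: "\<And>s. s \<in> {0<..<T} - S \<Longrightarrow> (\<eta> has_vector_derivative dyn (\<beta> s) (\<eta> s)) (at s)"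
  shows "trajectory T \<beta> x0 \<eta>"
  unfolding trajectory_def
proof (intro conjI ballI)
  show "\<eta> 0 = x0" by (rule e0)
  fix t assume t: "t \<in> {0..T}"
  have "((\<lambda>s. dyn (\<beta> s) (\<eta> s)) has_integral (\<eta> t - \<eta> 0)) {0..t}"
    by (rule fundamental_theorem_of_calculus_interior_strong[OF S])
      (use t der in \<open>auto intro: continuous_on_subset[OF cont]\<close>)
  then show "((\<lambda>s. dyn (\<beta> s) (\<eta> s)) has_integral (\<eta> t - x0)) {0..t}" using e0 by simp
qed

lemma traj_piecewise:
  assumes P: "\<And>s. (P has_vector_derivative dyn A (P s)) (at s)"
    and Q: "\<And>s. (Q has_vector_derivative dyn B (Q s)) (at s)"
    and PQ: "P \<tau> = Q \<tau>" and x0: "(if 0 < \<tau> then P 0 else Q 0) = x0"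
  shows "trajectory T (\<lambda>t. if t < \<tau> then A else B) x0 (\<lambda>t. if t < \<tau> then P t else Q t)"
proof (rule traj_from_deriv[where S="{\<tau>}"])
  show "(if 0 < \<tau> then P 0 else Q 0) = x0" by (rule x0)
  have Pc: "continuous_on X P" for X
    using P by (intro continuous_at_imp_continuous_on ballI has_vector_derivative_continuous) auto
  have Qc: "continuous_on X Q" for X
    using Q by (intro continuous_at_imp_continuous_on ballI has_vector_derivative_continuous) auto
  have eq: "(\<lambda>t. if t < \<tau> then P t else Q t) = (\<lambda>t. if t \<le> \<tau> then P t else Q t)"
    using PQ by (auto intro!: ext)
  show "continuous_on {0..T} (\<lambda>t. if t < \<tau> then P t else Q t)"
    unfolding eq by (rule continuous_on_cases_le[where h="\<lambda>t. t"]) (auto intro: Pc Qc PQ continuous_on_id)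
  fix s assume s: "s \<in> {0<..<T} - {\<tau>}"
  show "((\<lambda>t. if t < \<tau> then P t else Q t) has_vector_derivative
          dyn (if s < \<tau> then A else B) (if s < \<tau> then P s else Q s)) (at s)"
  proof (cases "s < \<tau>")
    case True
    have "((\<lambda>t. if t < \<tau> then P t else Q t) has_vector_derivative dyn A (P s)) (at s)"
      by (rule has_vector_derivative_transform_within_open[OF P[of s], where S="{..<\<tau>}"]) (use True in auto)
    then show ?thesis using True by simp
  next
    case False
    then have "\<tau> < s" using s by auto
    have "((\<lambda>t. if t < \<tau> then P t else Q t) has_vector_derivative dyn B (Q s)) (at s)"
      by (rule has_vector_derivative_transform_within_open[OF Q[of s], where S="{\<tau><..}"]) (use \<open>\<tau> < s\<close> in auto)
    then show ?thesis using False by simp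
  qed
qed auto

lemma pair_vd:
  "(f has_real_derivative a) (at s) \<Longrightarrow> (g has_real_derivative b) (at s) \<Longrightarrow>
   ((\<lambda>t. (f t, g t)) has_vector_derivative (a, b)) (at s)"
  by (simp add: has_real_derivative_iff_has_vector_derivative has_vector_derivative_Pair)

text \<open>The bang-bang controls (0,0) on [0,tau), (1,0) afterwards.\<close>
definition Pb :: "real \<Rightarrow> real \<Rightarrow> real \<Rightarrow> real \<times> real" where
  "Pb m0 d0 t = (m0 + d0 * exp (- t) / 2, m0 - d0 * exp (- t) / 2)"
definition Qb :: "real \<Rightarrow> real \<Rightarrow> real \<Rightarrow> real \<Rightarrow> real \<times> real" where
  "Qb m0 d0 \<tau> t = (m0 * exp (\<tau> - t) + d0 * exp (- t) / 2,
                    2 * m0 * exp ((\<tau> - t) / 2) - m0 * exp (\<tau> - t) - d0 * exp (- t) / 2)"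

lemma traj_bang:
  assumes "0 \<le> \<tau>"
  shows "trajectory T (\<lambda>t. if t < \<tau> then (0, 0) else (1, 0)) x0
           (\<lambda>t. if t < \<tau> then Pb (mean x0) (fst x0 - snd x0) t else Qb (mean x0) (fst x0 - snd x0) \<tau> t)"
proof (rule traj_piecewise)
  fix s
  have e: "dyn (0, 0) (Pb (mean x0) (fst x0 - snd x0) s) =
      (- (fst x0 - snd x0) * exp (- s) / 2, (fst x0 - snd x0) * exp (- s) / 2)"
    by (simp add: dyn_def mean_def Pb_def field_simps)
  show "(Pb (mean x0) (fst x0 - snd x0) has_vector_derivative dyn (0, 0) (Pb (mean x0) (fst x0 - snd x0) s)) (at s)"
    unfolding e unfolding Pb_def[abs_def]
    by (rule pair_vd) (auto intro!: derivative_eq_intros simp: field_simps)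
  have e2: "dyn (1, 0) (Qb (mean x0) (fst x0 - snd x0) \<tau> s) =
      (- (mean x0 * exp (\<tau> - s) + (fst x0 - snd x0) * exp (- s) / 2),
       - mean x0 * exp ((\<tau> - s) / 2) + mean x0 * exp (\<tau> - s) + (fst x0 - snd x0) * exp (- s) / 2)"
    by (simp add: dyn_def mean_def Qb_def field_simps)
  show "(Qb (mean x0) (fst x0 - snd x0) \<tau> has_vector_derivative dyn (1, 0) (Qb (mean x0) (fst x0 - snd x0) \<tau> s)) (at s)"
    unfolding e2 unfolding Qb_def[abs_def]
    by (rule pair_vd) (auto intro!: derivative_eq_intros simp: field_simps)
  show "Pb (mean x0) (fst x0 - snd x0) \<tau> = Qb (mean x0) (fst x0 - snd x0) \<tau> \<tau>"
    by (simp add: Pb_def Qb_def)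
  show "(if 0 < \<tau> then Pb (mean x0) (fst x0 - snd x0) 0 else Qb (mean x0) (fst x0 - snd x0) \<tau> 0) = x0"
    using assms by (auto simp: Pb_def Qb_def mean_def prod_eq_iff field_simps)
qed




lemma ae_from_fst:
  assumes adm: "admissible T \<beta>" and tr: "trajectory T \<beta> x0 \<eta>" and m0: "mean x0 > 0" and T: "0 \<le> T"
    and eq: "exp T * fst (\<eta> T) = fst x0"
  shows "AE t in lebesgue. t \<in> {0..T} \<longrightarrow> fst (\<beta> t) = 1"
proof -
  have e0: "\<eta> 0 = x0" using tr unfolding trajectory_def by auto
  have hi: "((\<lambda>s. exp s * ((1 - fst (\<beta> s)) * mean (\<eta> s))) has_integral 0) {0..T}"
    using traj_vc1[OF adm tr order.refl T order.refl] eq e0 by simp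
  have "AE t in lebesgue. t \<in> {0..T} \<longrightarrow> exp t * ((1 - fst (\<beta> t)) * mean (\<eta> t)) = 0"
    by (rule nonneg_zero_ae[OF hi])
      (use adm_bounds[OF adm] traj_mean_pos[OF adm tr T m0] in \<open>auto intro!: mult_nonneg_nonneg simp: less_imp_le\<close>)
  then show ?thesis
  proof eventually_elim
    case (elim t)
    show ?case
    proof
      assume t: "t \<in> {0..T}"
      then have "mean (\<eta> t) > 0" using traj_mean_pos[OF adm tr T m0] by auto
      then show "fst (\<beta> t) = 1" using elim t by auto
    qed
  qed
qed

lemma ae_from_snd:
  assumes adm: "admissible T \<beta>" and tr: "trajectory T \<beta> x0 \<eta>" and m0: "mean x0 > 0" and T: "0 \<le> T"
    and eq: "exp T * snd (\<eta> T) = snd x0"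
  shows "AE t in lebesgue. t \<in> {0..T} \<longrightarrow> snd (\<beta> t) = 1"
proof -
  have e0: "\<eta> 0 = x0" using tr unfolding trajectory_def by auto
  have hi: "((\<lambda>s. exp s * ((1 - snd (\<beta> s)) * mean (\<eta> s))) has_integral 0) {0..T}"
    using traj_vc2[OF adm tr order.refl T order.refl] eq e0 by simp
  have "AE t in lebesgue. t \<in> {0..T} \<longrightarrow> exp t * ((1 - snd (\<beta> t)) * mean (\<eta> t)) = 0"
    by (rule nonneg_zero_ae[OF hi])
      (use adm_bounds[OF adm] traj_mean_pos[OF adm tr T m0] in \<open>auto intro!: mult_nonneg_nonneg simp: less_imp_le\<close>)
  then show ?thesis
  proof eventually_elim
    case (elim t)
    show ?case
    proof
      assume t: "t \<in> {0..T}"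
      then have "mean (\<eta> t) > 0" using traj_mean_pos[OF adm tr T m0] by auto
      then show "snd (\<beta> t) = 1" using elim t by auto
    qed
  qed
qed

lemma sq_le_eq:
  fixes a b p q :: real
  assumes "p \<le> a" "0 \<le> p" "q \<le> b" "0 \<le> q" "a^2 + b^2 \<le> p^2 + q^2"
  shows "a = p" "b = q"
proof -
  have "p^2 \<le> a^2" using assms by (intro power_mono) auto
  moreover have "q^2 \<le> b^2" using assms by (intro power_mono) auto
  ultimately have "a^2 = p^2" "b^2 = q^2" using assms(5) by linarith+
  then show "a = p" "b = q" using assms
    by (metis abs_of_nonneg order.trans power2_eq_iff_nonneg)+
qed

lemma part_i:
  fixes T :: real and x0 :: "real \<times> real" and \<alpha> \<xi> :: "real \<Rightarrow> real \<times> real"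
  assumes T: "T > 0" and m0: "mean x0 > 0" and opt: "optimal T x0 \<alpha> \<xi>" and x2: "snd x0 > 0" and x12: "fst x0 > snd x0"
  shows "AE t in lebesgue. t \<in> {0..T} \<longrightarrow> \<alpha> t = (1, 1)"
proof -
  have adm: "admissible T \<alpha>" and tr: "trajectory T \<alpha> x0 \<xi>"
    and minc: "\<And>\<beta> \<eta>. admissible T \<beta> \<Longrightarrow> trajectory T \<beta> x0 \<eta> \<Longrightarrow> cost T \<xi> \<le> cost T \<eta>"
    using opt unfolding optimal_def by auto
  have T0: "0 \<le> T" using T by simp
  have x1: "fst x0 > 0" using x12 x2 by auto
  define R where "R = (\<lambda>t::real. (fst x0 * exp (- t), snd x0 * exp (- t)))"
  have ac: "admissible T (\<lambda>t. if t < 0 then (1::real, 1::real) else (1, 1))"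
    by (rule adm_step) auto
  have tc: "trajectory T (\<lambda>t. if t < 0 then (1::real, 1::real) else (1, 1)) x0 (\<lambda>t. if t < 0 then R t else R t)"
  proof (rule traj_piecewise)
    fix s
    have e: "dyn (1, 1) (R s) = (- fst x0 * exp (- s), - snd x0 * exp (- s))" by (simp add: dyn_def R_def)
    show "(R has_vector_derivative dyn (1, 1) (R s)) (at s)"
      unfolding e unfolding R_def by (rule pair_vd) (auto intro!: derivative_eq_intros)
    then show "(R has_vector_derivative dyn (1, 1) (R s)) (at s)" .
  qed (auto simp: R_def)
  have "cost T \<xi> \<le> cost T (\<lambda>t. if t < 0 then R t else R t)" by (rule minc[OF ac tc])
  then have c: "fst (\<xi> T)^2 + snd (\<xi> T)^2 \<le> (fst x0 * exp (- T))^2 + (snd x0 * exp (- T))^2"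
    by (simp add: cost_def R_def)
  have l1: "fst x0 * exp (- T) \<le> fst (\<xi> T)" and l2: "snd x0 * exp (- T) \<le> snd (\<xi> T)"
    using traj_fst_lower[OF adm tr m0, of T] T0
    by (auto simp: exp_minus field_simps)
  have e1: "fst (\<xi> T) = fst x0 * exp (- T)" and e2: "snd (\<xi> T) = snd x0 * exp (- T)"
    using sq_le_eq[OF l1 _ l2 _ c] x1 x2 by auto
  have a1: "AE t in lebesgue. t \<in> {0..T} \<longrightarrow> fst (\<alpha> t) = 1"
    by (rule ae_from_fst[OF adm tr m0 T0]) (simp add: e1 exp_minus)
  have a2: "AE t in lebesgue. t \<in> {0..T} \<longrightarrow> snd (\<alpha> t) = 1"
    by (rule ae_from_snd[OF adm tr m0 T0]) (simp add: e2 exp_minus)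
  from a1 a2 show ?thesis by eventually_elim (auto simp: prod_eq_iff)
qed




lemma vc_nonneg:
  assumes adm: "admissible T \<beta>" and tr: "trajectory T \<beta> x0 \<eta>" and m0: "mean x0 > 0" and s: "s \<in> {0..T}"
  shows "0 \<le> exp s * ((1 - fst (\<beta> s)) * mean (\<eta> s))" "0 \<le> exp s * ((1 - snd (\<beta> s)) * mean (\<eta> s))"
  using adm_bounds[OF adm s] traj_mean_pos[OF adm tr _ m0 s] s
  by (auto intro!: mult_nonneg_nonneg simp: less_imp_le)

lemma part_ii:
  fixes T :: real and x0 :: "real \<times> real" and \<alpha> \<xi> :: "real \<Rightarrow> real \<times> real"
  assumes T: "T > 0" and m0: "mean x0 > 0" and x12: "fst x0 > snd x0" and opt: "optimal T x0 \<alpha> \<xi>"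
    and x2: "snd x0 \<le> 0" and t0: "t0 = 2 * ln (fst x0 / (2 * mean x0))" and Tt0: "T \<ge> t0"
  shows "snd (\<xi> T) = 0
          \<and> (AE t in lebesgue. t \<in> {0..T} \<longrightarrow> fst (\<alpha> t) = 1)
          \<and> (\<exists>\<eta>. optimal T x0 (\<lambda>t. if t < t0 then (1, 0) else (1, 1)) \<eta>)
          \<and> (\<forall>tb\<in>{0..<T}. snd (\<xi> tb) = 0 \<longrightarrow> (\<forall>t\<in>{tb..T}. snd (\<xi> t) = 0))"
proof -
  have adm: "admissible T \<alpha>" and tr: "trajectory T \<alpha> x0 \<xi>"
    and minc: "\<And>\<beta> \<eta>. admissible T \<beta> \<Longrightarrow> trajectory T \<beta> x0 \<eta> \<Longrightarrow> cost T \<xi> \<le> cost T \<eta>"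
    using opt unfolding optimal_def by auto
  have T0: "0 \<le> T" using T by simp
  define x1 where "x1 = fst x0"
  define m where "m = mean x0"
  have mx: "m = (fst x0 + snd x0) / 2" by (simp add: m_def mean_def)
  have x1p: "x1 > 0" using x12 m0 unfolding x1_def mean_def by auto
  have m2: "2 * m \<le> x1" using x2 unfolding mx x1_def by auto
  have mp: "m > 0" using m0 m_def by simp
  define r where "r = x1 / (2 * m)"
  have r1: "r \<ge> 1" unfolding r_def using m2 mp by simp
  have t0r: "t0 = 2 * ln r" unfolding t0 r_def x1_def m_def by simp
  have t0n: "t0 \<ge> 0" using r1 t0r by simp
  have eh: "exp (t0 / 2) = r" using r1 t0r by simp
  have emh: "exp (- t0 / 2) = 2 * m / x1"
    using eh mp x1p unfolding r_def by (simp add: exp_minus divide_simps) (metis mult.commute)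
  have em: "exp (- t0) = (2 * m / x1)^2"
  proof -
    have "exp (- t0) = exp (- t0 / 2) ^ 2" by (simp add: power2_eq_square exp_add[symmetric])
    then show ?thesis using emh by simp
  qed
  define P where "P = (\<lambda>t::real. (x1 * exp (- t), 2 * m * exp (- t / 2) - x1 * exp (- t)))"
  define Q where "Q = (\<lambda>t::real. (x1 * exp (- t), 0::real))"
  have ac: "admissible T (\<lambda>t. if t < t0 then (1::real, 0::real) else (1, 1))"
    by (rule adm_step) auto
  have tc: "trajectory T (\<lambda>t. if t < t0 then (1::real, 0::real) else (1, 1)) x0 (\<lambda>t. if t < t0 then P t else Q t)"
  proof (rule traj_piecewise)
    fix s
    have e: "dyn (1, 0) (P s) = (- x1 * exp (- s), - m * exp (- s / 2) + x1 * exp (- s))"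
      by (simp add: dyn_def P_def mean_def field_simps)
    show "(P has_vector_derivative dyn (1, 0) (P s)) (at s)"
      unfolding e unfolding P_def by (rule pair_vd) (auto intro!: derivative_eq_intros simp: field_simps)
    have e2: "dyn (1, 1) (Q s) = (- x1 * exp (- s), 0)" by (simp add: dyn_def Q_def)
    show "(Q has_vector_derivative dyn (1, 1) (Q s)) (at s)"
      unfolding e2 unfolding Q_def by (rule pair_vd) (auto intro!: derivative_eq_intros)
  next
    show "P t0 = Q t0" unfolding P_def Q_def using emh em x1p
      by (simp add: power2_eq_square)
  next
    show "(if 0 < t0 then P 0 else Q 0) = x0"
    proof (cases "0 < t0")
      case True then show ?thesis unfolding P_def x1_def mx by (auto simp: prod_eq_iff field_simps)
    next
      case False
      then have "t0 = 0" using t0n by simp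
      then have "r = 1" using eh by simp
      then have "snd x0 = 0" using mp unfolding r_def x1_def mx by (simp add: field_simps)
      then show ?thesis using False unfolding Q_def x1_def by (auto simp: prod_eq_iff)
    qed
  qed
  define \<eta>c where "\<eta>c = (\<lambda>t. if t < t0 then P t else Q t)"
  have costc: "cost T \<eta>c = (x1 * exp (- T))^2 / 2"
    using Tt0 by (simp add: cost_def \<eta>c_def Q_def)
  have lbany: "(x1 * exp (- T))^2 \<le> fst (\<eta> T)^2" if "admissible T \<beta>" "trajectory T \<beta> x0 \<eta>" for \<beta> \<eta>
  proof -
    have "x1 \<le> exp T * fst (\<eta> T)" using traj_fst_lower(1)[OF that m0, of T] T0 x1_def by auto
    then have "x1 * exp (- T) \<le> fst (\<eta> T)" by (simp add: exp_minus field_simps)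
    then show ?thesis using x1p by (intro power_mono) auto
  qed
  have optc: "optimal T x0 (\<lambda>t. if t < t0 then (1, 0) else (1, 1)) \<eta>c"
    unfolding optimal_def
  proof (intro conjI allI impI)
    show "admissible T (\<lambda>t. if t < t0 then (1, 0) else (1, 1))" using ac by simp
    show "trajectory T (\<lambda>t. if t < t0 then (1, 0) else (1, 1)) x0 \<eta>c" using tc by (simp add: \<eta>c_def)
    fix \<beta> \<eta> assume a: "admissible T \<beta>" "trajectory T \<beta> x0 \<eta>"
    have h: "(x1 * exp (- T))^2 / 2 \<le> cost T \<eta>"
      using lbany[OF a] zero_le_power2[of "snd (\<eta> T)"] unfolding cost_def by (intro divide_right_mono add_increasing2) auto
    then show "cost T \<eta>c \<le> cost T \<eta>" using costc by simp
  qed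
  have "cost T \<xi> \<le> cost T \<eta>c" using minc[OF ac] tc by (simp add: \<eta>c_def)
  then have "cost T \<xi> \<le> (x1 * exp (- T))^2 / 2" using costc by simp
  then have c: "fst (\<xi> T)^2 + snd (\<xi> T)^2 \<le> (x1 * exp (- T))^2" unfolding cost_def by simp
  have l: "(x1 * exp (- T))^2 \<le> fst (\<xi> T)^2" by (rule lbany[OF adm tr])
  have "snd (\<xi> T)^2 \<le> 0" using c l by linarith
  then have s0: "snd (\<xi> T) = 0" by simp
  have "fst (\<xi> T)^2 = (x1 * exp (- T))^2" using c l s0 by simp
  moreover have "x1 * exp (- T) \<le> fst (\<xi> T)"
    using traj_fst_lower(1)[OF adm tr m0, of T] T0 x1_def by (simp add: exp_minus field_simps)
  moreover have p0: "0 \<le> x1 * exp (- T)" using x1p by simp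
  ultimately have f1: "fst (\<xi> T) = x1 * exp (- T)"
    using power2_eq_iff_nonneg[of "fst (\<xi> T)" "x1 * exp (- T)"] by linarith
  have ae: "AE t in lebesgue. t \<in> {0..T} \<longrightarrow> fst (\<alpha> t) = 1"
    by (rule ae_from_fst[OF adm tr m0 T0]) (simp add: f1 x1_def exp_minus)
  have last: "\<forall>tb\<in>{0..<T}. snd (\<xi> tb) = 0 \<longrightarrow> (\<forall>t\<in>{tb..T}. snd (\<xi> t) = 0)"
  proof (intro ballI impI)
    fix tb t assume tb: "tb \<in> {0..<T}" and z: "snd (\<xi> tb) = 0" and t: "t \<in> {tb..T}"
    have "0 \<le> exp t * snd (\<xi> t) - exp tb * snd (\<xi> tb)"
      by (rule has_integral_nonneg[OF traj_vc2[OF adm tr, of tb t]])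
        (use tb t vc_nonneg(2)[OF adm tr m0] in auto)
    then have g: "0 \<le> snd (\<xi> t)" using z by (simp add: zero_le_mult_iff)
    have "0 \<le> exp T * snd (\<xi> T) - exp t * snd (\<xi> t)"
      by (rule has_integral_nonneg[OF traj_vc2[OF adm tr, of t T]])
        (use tb t vc_nonneg(2)[OF adm tr m0] in auto)
    then have "snd (\<xi> t) \<le> 0" using s0 by (simp add: mult_le_0_iff)
    then show "snd (\<xi> t) = 0" using g by simp
  qed
  show ?thesis using s0 ae optc last by blast
qed




lemma cost_id: "cost T \<eta> = mean (\<eta> T)^2 + (fst (\<eta> T) - snd (\<eta> T))^2 / 4"
  by (simp add: cost_def mean_def power2_eq_square field_simps)

definition hh :: "real \<Rightarrow> real \<Rightarrow> real \<Rightarrow> real \<Rightarrow> real" where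
  "hh m d T \<tau> = 2 * m * exp (\<tau> - T) + d * exp (- T) - 2 * m * exp ((\<tau> - T) / 2)"

lemma bang_cost:
  assumes "\<tau> \<le> T"
  shows "cost T (\<lambda>t. if t < \<tau> then Pb m d t else Qb m d \<tau> t) = (m * exp ((\<tau> - T) / 2))^2 + (hh m d T \<tau>)^2 / 4"
proof -
  have "\<not> T < \<tau>" using assms by simp
  have q1: "mean (Qb m d \<tau> T) = m * exp ((\<tau> - T) / 2)" by (simp add: Qb_def mean_def field_simps)
  have q2: "fst (Qb m d \<tau> T) - snd (Qb m d \<tau> T) = hh m d T \<tau>" by (simp add: Qb_def hh_def field_simps)
  show ?thesis unfolding cost_id using \<open>\<not> T < \<tau>\<close> q1 q2 by simp
qed

lemma bang_ok:
  assumes "0 \<le> \<tau>"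
  shows "admissible T (\<lambda>t. if t < \<tau> then (0::real, 0::real) else (1, 0))"
    "trajectory T (\<lambda>t. if t < \<tau> then (0, 0) else (1, 0)) x0
           (\<lambda>t. if t < \<tau> then Pb (mean x0) (fst x0 - snd x0) t else Qb (mean x0) (fst x0 - snd x0) \<tau> t)"
  by (rule adm_step; simp) (rule traj_bang[OF assms])




lemma traj_V:
  assumes adm: "admissible T \<beta>" and tr: "trajectory T \<beta> x0 \<eta>"
    and ut: "0 \<le> u" "u \<le> t" "t \<le> T"
    and cd: "\<And>s. s \<in> {u..t} \<Longrightarrow> (c has_real_derivative c' s) (at s)"
    and cc: "continuous_on {u..t} c'"
  shows "((\<lambda>s. mean (\<eta> s) * (c' s - c s * (fst (\<beta> s) + snd (\<beta> s)) / 2 + exp s * (snd (\<beta> s) - fst (\<beta> s))))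
    has_integral (c t * mean (\<eta> t) + exp t * (fst (\<eta> t) - snd (\<eta> t)) - c u * mean (\<eta> u) - exp u * (fst (\<eta> u) - snd (\<eta> u)))) {u..t}"
proof -
  have h1: "((\<lambda>s. c' s * (1/2 * fst (\<eta> s) + 1/2 * snd (\<eta> s)) + c s * (1/2 * fst (dyn (\<beta> s) (\<eta> s)) + 1/2 * snd (dyn (\<beta> s) (\<eta> s))))
     has_integral (c t * (1/2 * fst (\<eta> t) + 1/2 * snd (\<eta> t)) - c u * (1/2 * fst (\<eta> u) + 1/2 * snd (\<eta> u)))) {u..t}"
    by (rule traj_prod[OF adm tr ut cd cc])
  have h2: "((\<lambda>s. exp s * (1 * fst (\<eta> s) + (-1) * snd (\<eta> s)) + exp s * (1 * fst (dyn (\<beta> s) (\<eta> s)) + (-1) * snd (dyn (\<beta> s) (\<eta> s))))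
     has_integral (exp t * (1 * fst (\<eta> t) + (-1) * snd (\<eta> t)) - exp u * (1 * fst (\<eta> u) + (-1) * snd (\<eta> u)))) {u..t}"
    by (rule traj_prod[OF adm tr ut]) (auto intro!: DERIV_exp continuous_intros)
  show ?thesis
    by (rule hi_eq[OF has_integral_add[OF h1 h2]]) (simp_all add: dyn_def mean_def field_simps)
qed

lemma part_iii:
  fixes T :: real and x0 :: "real \<times> real" and \<alpha> \<xi> :: "real \<Rightarrow> real \<times> real"
  assumes T: "T > 0" and m0: "mean x0 > 0" and x12: "fst x0 > snd x0" and opt: "optimal T x0 \<alpha> \<xi>"
    and ord: "\<forall>t\<in>{0..T}. fst (\<xi> t) \<ge> snd (\<xi> t)"
    and x2: "snd x0 \<le> 0" and t0: "t0 = 2 * ln (fst x0 / (2 * mean x0))" and Tt0: "T < t0"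
  shows "\<exists>ts\<in>{0..<T}. AE t in lebesgue.
                 (t \<in> {0..<ts} \<longrightarrow> \<alpha> t = (0, 0)) \<and> (t \<in> {ts..T} \<longrightarrow> \<alpha> t = (1, 0))"
proof -
  have adm: "admissible T \<alpha>" and tr: "trajectory T \<alpha> x0 \<xi>"
    and minc: "\<And>\<beta> \<eta>. admissible T \<beta> \<Longrightarrow> trajectory T \<beta> x0 \<eta> \<Longrightarrow> cost T \<xi> \<le> cost T \<eta>"
    using opt unfolding optimal_def by auto
  have T0: "0 \<le> T" using T by simp
  have e0: "\<xi> 0 = x0" using tr unfolding trajectory_def by auto
  define x1 where "x1 = fst x0"
  define m where "m = mean x0"
  define d where "d = fst x0 - snd x0"
  have mx: "m = (fst x0 + snd x0) / 2" by (simp add: m_def mean_def)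
  have mp: "m > 0" using m0 m_def by simp
  have dp: "d > 0" using x12 d_def by simp
  have x1p: "x1 > 0" using x12 m0 unfolding x1_def mean_def by auto
  have md: "2 * m + d = 2 * x1" unfolding mx d_def x1_def by (simp add: field_simps)
  have K1: "2 * m * exp (T / 2) < x1"
  proof -
    have "T / 2 < ln (x1 / (2 * m))" using Tt0 t0 unfolding x1_def m_def by simp
    then have "exp (T / 2) < exp (ln (x1 / (2 * m)))" by simp
    also have "\<dots> = x1 / (2 * m)" using x1p mp by simp
    finally show ?thesis using mp by (simp add: field_simps)
  qed
  define M where "M = (\<lambda>s. mean (\<xi> s))"
  define D where "D = (\<lambda>s. fst (\<xi> s) - snd (\<xi> s))"
  define \<mu> where "\<mu> = M T"
  define \<delta> where "\<delta> = D T"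
  have Mpos: "\<And>s. s \<in> {0..T} \<Longrightarrow> M s > 0" unfolding M_def using traj_mean_pos[OF adm tr T0 m0] by auto
  have Mle: "\<And>s. s \<in> {0..T} \<Longrightarrow> M s \<le> m"
    unfolding M_def m_def using traj_mean_le[OF adm tr m0, of 0] e0 by auto
  have \<delta>0: "\<delta> \<ge> 0" using ord T0 unfolding \<delta>_def D_def by auto
  have \<mu>p: "\<mu> > 0" using Mpos T0 unfolding \<mu>_def by auto
  have \<mu>m: "\<mu> \<le> m" using Mle T0 unfolding \<mu>_def by auto
  have costx: "cost T \<xi> = \<mu>^2 + \<delta>^2 / 4" unfolding cost_id \<mu>_def \<delta>_def M_def D_def ..
  have bangc: "cost T \<xi> \<le> cost T (\<lambda>t. if t < \<tau> then Pb m d t else Qb m d \<tau> t)" if "0 \<le> \<tau>" for \<tau>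
    unfolding m_def d_def by (rule minc[OF bang_ok[OF that]])
  have bang: "\<mu>^2 + \<delta>^2 / 4 \<le> (m * exp ((\<tau> - T) / 2))^2 + (hh m d T \<tau>)^2 / 4" if "0 \<le> \<tau>" "\<tau> \<le> T" for \<tau>
    using bangc[OF that(1)] bang_cost[OF that(2)] costx by simp
  have caseA: "m * exp (- T / 2) \<le> \<mu>"
  proof (rule ccontr)
    assume "\<not> m * exp (- T / 2) \<le> \<mu>"
    then have lt: "\<mu> < m * exp (- T / 2)" by simp
    have f: "x1 * exp (- T) \<le> fst (\<xi> T)"
      using traj_fst_lower(1)[OF adm tr m0, of T] T0 x1_def by (simp add: exp_minus field_simps)
    have sn: "snd (\<xi> T) = 2 * \<mu> - fst (\<xi> T)" unfolding \<mu>_def M_def mean_def by (simp add: field_simps)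
    have e1: "exp (T / 2) * exp (- T) = exp (- T / 2)" by (simp add: exp_add[symmetric])
    define b0 where "b0 = 2 * m * exp (- T / 2) - x1 * exp (- T)"
    have "2 * m * exp (T / 2) * exp (- T) < x1 * exp (- T)" using K1 by simp
    then have b0n: "b0 < 0" unfolding b0_def using e1 by (simp add: mult.assoc)
    have slt: "snd (\<xi> T) < b0" using sn lt f unfolding b0_def by linarith
    have q: "Qb m d 0 T = (x1 * exp (- T), b0)"
    proof -
      have xe: "x1 = m + d / 2" using md by simp
      show ?thesis unfolding Qb_def b0_def xe by (auto simp: field_simps)
    qed
    have "cost T \<xi> \<le> ((x1 * exp (- T))^2 + b0^2) / 2"
      using bangc[of 0] q T by (simp add: cost_def)
    moreover have "(x1 * exp (- T))^2 \<le> fst (\<xi> T)^2" using f x1p by (intro power_mono) auto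
    moreover have "b0^2 < snd (\<xi> T)^2"
    proof -
      have "(- b0)^2 < (- snd (\<xi> T))^2" using b0n slt by (intro power_strict_mono) auto
      then show ?thesis by simp
    qed
    ultimately show False unfolding cost_def by simp
  qed
  define \<tau>s where "\<tau>s = T + 2 * ln (\<mu> / m)"
  have er: "exp ((\<tau>s - T) / 2) = \<mu> / m" unfolding \<tau>s_def using \<mu>p mp by simp
  have \<tau>T: "\<tau>s \<le> T" unfolding \<tau>s_def using \<mu>p mp \<mu>m by (simp add: ln_div)
  have \<tau>0: "0 \<le> \<tau>s"
  proof -
    have "exp (- T / 2) \<le> \<mu> / m" using caseA mp by (simp add: field_simps)
    then have "ln (exp (- T / 2)) \<le> ln (\<mu> / m)" using \<mu>p mp by (subst ln_le_cancel_iff) auto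
    then show ?thesis unfolding \<tau>s_def by simp
  qed
  define k where "k = exp (\<tau>s / 2)"
  have kp: "k > 0" unfolding k_def by simp
  have kk: "k * k = exp \<tau>s" unfolding k_def by (simp add: exp_add[symmetric])
  have kT: "k * exp (T / 2) * \<mu> = m * exp \<tau>s"
  proof -
    have A: "k * exp (T / 2) = exp T * (\<mu> / m)"
      unfolding k_def er[symmetric] by (simp add: exp_add[symmetric] field_simps)
    have B: "exp \<tau>s = exp T * (\<mu> / m) * (\<mu> / m)"
      unfolding er[symmetric] by (simp add: exp_add[symmetric] field_simps)
    have "k * exp (T / 2) * \<mu> = exp T * (\<mu> / m) * \<mu>" using A by simp
    also have "\<dots> = m * (exp T * (\<mu> / m) * (\<mu> / m))" using mp by (simp add: field_simps)
    also have "\<dots> = m * exp \<tau>s" using B by simp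
    finally show ?thesis .
  qed
  have \<mu>e: "m * exp ((\<tau>s - T) / 2) = \<mu>" using er mp by simp
  have M0: "M 0 = m" unfolding M_def m_def using e0 by simp
  have D0: "D 0 = d" unfolding D_def d_def using e0 by simp
  have ab: "\<And>s. s \<in> {0..T} \<Longrightarrow> 0 \<le> fst (\<alpha> s) \<and> fst (\<alpha> s) \<le> 1 \<and> 0 \<le> snd (\<alpha> s) \<and> snd (\<alpha> s) \<le> 1"
    using adm_bounds[OF adm] by auto
  define g3 where "g3 = (\<lambda>s. 2 * exp s * (m - M s * (1 - snd (\<alpha> s))))"
  define v3 where "v3 = 2 * m * exp \<tau>s - 2 * exp \<tau>s * M \<tau>s + exp \<tau>s * D \<tau>s - d"
  have hA1: "((\<lambda>s. mean (\<xi> s) * ((-2 * exp s) - (-2 * exp s) * (fst (\<alpha> s) + snd (\<alpha> s)) / 2 + exp s * (snd (\<alpha> s) - fst (\<alpha> s))))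
    has_integral ((-2 * exp \<tau>s) * mean (\<xi> \<tau>s) + exp \<tau>s * (fst (\<xi> \<tau>s) - snd (\<xi> \<tau>s)) - (-2 * exp 0) * mean (\<xi> 0) - exp 0 * (fst (\<xi> 0) - snd (\<xi> 0)))) {0..\<tau>s}"
    by (rule traj_V[OF adm tr order.refl \<tau>0 \<tau>T]) (auto intro!: derivative_eq_intros continuous_intros)
  have hE: "((\<lambda>s. 2 * m * exp s) has_integral (2 * m * exp \<tau>s - 2 * m * exp 0)) {0..\<tau>s}"
  proof (rule fundamental_theorem_of_calculus[OF \<tau>0])
    fix s assume "s \<in> {0..\<tau>s}"
    have "((\<lambda>s. 2 * m * exp s) has_real_derivative 2 * m * exp s) (at s within {0..\<tau>s})"
      by (auto intro!: derivative_eq_intros)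
    then show "((\<lambda>s. 2 * m * exp s) has_vector_derivative 2 * m * exp s) (at s within {0..\<tau>s})"
      by (simp add: has_real_derivative_iff_has_vector_derivative)
  qed
  have hg3: "(g3 has_integral v3) {0..\<tau>s}"
    by (rule hi_eq[OF has_integral_add[OF hA1 hE]])
      (auto simp: g3_def v3_def M_def D_def e0 m_def d_def field_simps)
  define g2 where "g2 = (\<lambda>s. M s * ((1 - fst (\<alpha> s)) * (2 * exp s - 2 * k * exp (s / 2)) + 2 * k * snd (\<alpha> s) * exp (s / 2)))"
  define v2 where "v2 = (2 * exp T - 4 * k * exp (T / 2)) * \<mu> + exp T * \<delta> - (2 * exp \<tau>s - 4 * k * k) * M \<tau>s - exp \<tau>s * D \<tau>s"
  have hA2: "((\<lambda>s. mean (\<xi> s) * ((2 * exp s - 2 * k * exp (s / 2)) - (2 * exp s - 4 * k * exp (s / 2)) * (fst (\<alpha> s) + snd (\<alpha> s)) / 2 + exp s * (snd (\<alpha> s) - fst (\<alpha> s))))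
    has_integral ((2 * exp T - 4 * k * exp (T / 2)) * mean (\<xi> T) + exp T * (fst (\<xi> T) - snd (\<xi> T)) - (2 * exp \<tau>s - 4 * k * exp (\<tau>s / 2)) * mean (\<xi> \<tau>s) - exp \<tau>s * (fst (\<xi> \<tau>s) - snd (\<xi> \<tau>s)))) {\<tau>s..T}"
    by (rule traj_V[OF adm tr \<tau>0 \<tau>T order.refl]) (auto intro!: derivative_eq_intros continuous_intros)
  have hg2: "(g2 has_integral v2) {\<tau>s..T}"
    by (rule hi_eq[OF hA2]) (auto simp: g2_def v2_def M_def D_def \<mu>_def \<delta>_def k_def[symmetric] field_simps)
  have g3nn: "\<And>s. s \<in> {0..\<tau>s} \<Longrightarrow> 0 \<le> g3 s"
  proof -
    fix s assume s: "s \<in> {0..\<tau>s}"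
    then have sT: "s \<in> {0..T}" using \<tau>T by auto
    have "M s * (1 - snd (\<alpha> s)) \<le> M s" using Mpos[OF sT] ab[OF sT] by (simp add: mult_left_le)
    then show "0 \<le> g3 s" unfolding g3_def using Mle[OF sT] by simp
  qed
  have g2nn: "\<And>s. s \<in> {\<tau>s..T} \<Longrightarrow> 0 \<le> g2 s"
  proof -
    fix s assume s: "s \<in> {\<tau>s..T}"
    then have sT: "s \<in> {0..T}" using \<tau>0 by auto
    have ks: "k \<le> exp (s / 2)" unfolding k_def using s by simp
    have "exp s = exp (s / 2) * exp (s / 2)" by (simp add: exp_add[symmetric])
    then have "0 \<le> 2 * exp s - 2 * k * exp (s / 2)" using ks by (simp add: mult_right_mono)
    then show "0 \<le> g2 s" unfolding g2_def using Mpos[OF sT] ab[OF sT] kp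
      by (intro mult_nonneg_nonneg add_nonneg_nonneg) auto
  qed
  have hhv: "hh m d T \<tau>s = 2 * m * exp \<tau>s / exp T + d / exp T - 2 * \<mu>"
    unfolding hh_def using \<mu>e by (simp add: exp_diff exp_minus field_simps)
  have vsum: "v3 + v2 = exp T * (\<delta> - hh m d T \<tau>s)"
  proof -
    have "v3 + v2 = 2 * m * exp \<tau>s - d - 4 * (k * exp (T / 2) * \<mu>) + 2 * exp T * \<mu> + exp T * \<delta>"
      unfolding v3_def v2_def using kk by (simp add: algebra_simps)
    also have "\<dots> = 2 * m * exp \<tau>s - d - 4 * (m * exp \<tau>s) + 2 * exp T * \<mu> + exp T * \<delta>" using kT by simp
    also have "\<dots> = exp T * (\<delta> - hh m d T \<tau>s)" unfolding hhv by (simp add: field_simps)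
    finally show ?thesis .
  qed
  have v3nn: "0 \<le> v3" by (rule has_integral_nonneg[OF hg3 g3nn])
  have v2nn: "0 \<le> v2" by (rule has_integral_nonneg[OF hg2 g2nn])
  have "0 \<le> exp T * (\<delta> - hh m d T \<tau>s)" using vsum v3nn v2nn by linarith
  then have dge: "hh m d T \<tau>s \<le> \<delta>" by (simp add: zero_le_mult_iff)
  have hhc: "continuous_on X (hh m d T)" for X unfolding hh_def[abs_def] by (intro continuous_intros) auto
  have hh0: "hh m d T 0 > 0"
  proof -
    have e1: "exp (T / 2) * exp (- T) = exp (- T / 2)" by (simp add: exp_add[symmetric])
    have "2 * m * exp (T / 2) * exp (- T) < x1 * exp (- T)" using K1 by simp
    then have a: "2 * m * exp (- T / 2) < x1 * exp (- T)" using e1 by (simp add: mult.assoc)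
    have "hh m d T 0 = (2 * m + d) * exp (- T) - 2 * m * exp (- T / 2)" unfolding hh_def by (simp add: algebra_simps)
    also have "\<dots> = 2 * x1 * exp (- T) - 2 * m * exp (- T / 2)" using md by simp
    finally have hv: "hh m d T 0 = 2 * x1 * exp (- T) - 2 * m * exp (- T / 2)" .
    have "0 < x1 * exp (- T)" using x1p by simp
    then show ?thesis using a hv by linarith
  qed
  have hnn: "0 \<le> hh m d T \<tau>s"
  proof (rule ccontr)
    assume neg: "\<not> 0 \<le> hh m d T \<tau>s"
    obtain x where x: "0 \<le> x" "x \<le> \<tau>s" "hh m d T x = 0"
      using IVT2'[of "hh m d T" \<tau>s 0 0] neg hh0 \<tau>0 hhc by force
    have "x \<noteq> \<tau>s" using x neg by auto
    then have xl: "x < \<tau>s" using x by simp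
    have b: "\<mu>^2 + \<delta>^2 / 4 \<le> (m * exp ((x - T) / 2))^2" using bang[of x] x \<tau>T by simp
    have "m * exp ((x - T) / 2) < m * exp ((\<tau>s - T) / 2)" using xl mp by simp
    then have "(m * exp ((x - T) / 2))^2 < \<mu>^2" unfolding \<mu>e using mp by (intro power_strict_mono) auto
    moreover have "0 \<le> \<delta>^2 / 4" by simp
    ultimately show False using b by linarith
  qed
  have deq: "\<delta> = hh m d T \<tau>s"
  proof (rule ccontr)
    assume "\<delta> \<noteq> hh m d T \<tau>s"
    then have lt: "hh m d T \<tau>s < \<delta>" using dge by simp
    have b: "\<mu>^2 + \<delta>^2 / 4 \<le> \<mu>^2 + (hh m d T \<tau>s)^2 / 4" using bang[OF \<tau>0 \<tau>T] \<mu>e by simp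
    have "(hh m d T \<tau>s)^2 < \<delta>^2" using lt hnn by (intro power_strict_mono) auto
    then show False using b by simp
  qed
  have v3z: "v3 = 0" and v2z: "v2 = 0" using vsum deq v3nn v2nn by auto
  define \<kappa> where "\<kappa> = (\<lambda>\<tau>. (m * exp ((\<tau> - T) / 2)) * (m * exp ((\<tau> - T) / 2)) + (hh m d T \<tau>) * (hh m d T \<tau>) / 4)"
  have \<tau>lt: "\<tau>s < T"
  proof (rule ccontr)
    assume "\<not> \<tau>s < T"
    then have \<tau>eq: "\<tau>s = T" using \<tau>T by simp
    have \<mu>eq: "\<mu> = m" using \<mu>e \<tau>eq by simp
    have der: "(\<kappa> has_real_derivative (m * m + d * exp (- T) * m / 2)) (at T)"
      unfolding \<kappa>_def hh_def
      by (rule derivative_eq_intros refl | simp)+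
    have "0 < m * m + d * exp (- T) * m / 2" using mp dp by (simp add: add_pos_pos)
    then obtain dd where dd: "dd > 0" "\<And>h. h > 0 \<Longrightarrow> h < dd \<Longrightarrow> \<kappa> (T - h) < \<kappa> T"
      using DERIV_pos_inc_left[OF der] by blast
    define h where "h = min (dd / 2) T"
    have h: "h > 0" "h < dd" "h \<le> T" using dd T unfolding h_def by auto
    have "\<mu>^2 + \<delta>^2 / 4 \<le> (m * exp ((T - h - T) / 2))^2 + (hh m d T (T - h))^2 / 4"
      using bang[of "T - h"] h by simp
    also have "\<dots> = \<kappa> (T - h)" unfolding \<kappa>_def by (simp add: power2_eq_square)
    also have "\<dots> < \<kappa> T" using dd(2) h by simp
    also have "\<kappa> T = \<mu>^2 + \<delta>^2 / 4" unfolding \<kappa>_def deq \<tau>eq \<mu>eq by (simp add: power2_eq_square)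
    finally show False by simp
  qed
  have AE2: "AE t in lebesgue. t \<in> {\<tau>s..T} \<longrightarrow> g2 t = 0"
    by (rule nonneg_zero_ae[OF _ g2nn]) (use hg2 v2z in simp)
  have AEb: "AE t in lebesgue. t \<in> {\<tau>s..T} \<and> t \<noteq> \<tau>s \<longrightarrow> fst (\<alpha> t) = 1 \<and> snd (\<alpha> t) = 0"
    using AE2
  proof eventually_elim
    case (elim t)
    show ?case
    proof
      assume t: "t \<in> {\<tau>s..T} \<and> t \<noteq> \<tau>s"
      then have tT: "t \<in> {0..T}" using \<tau>0 by auto
      have gt: "\<tau>s < t" using t by auto
      have ks: "k < exp (t / 2)" unfolding k_def using gt by simp
      have et: "exp t = exp (t / 2) * exp (t / 2)" by (simp add: exp_add[symmetric])
      have Ap: "0 < 2 * exp t - 2 * k * exp (t / 2)" using ks unfolding et by (simp add: mult_strict_right_mono)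
      have z: "(1 - fst (\<alpha> t)) * (2 * exp t - 2 * k * exp (t / 2)) + 2 * k * snd (\<alpha> t) * exp (t / 2) = 0"
        using elim t Mpos[OF tT] unfolding g2_def by auto
      have n1: "0 \<le> (1 - fst (\<alpha> t)) * (2 * exp t - 2 * k * exp (t / 2))" using ab[OF tT] Ap by simp
      have n2: "0 \<le> 2 * k * snd (\<alpha> t) * exp (t / 2)" using ab[OF tT] kp by simp
      have "(1 - fst (\<alpha> t)) * (2 * exp t - 2 * k * exp (t / 2)) = 0" using z n1 n2 by linarith
      then have "fst (\<alpha> t) = 1" using Ap by simp
      moreover have "2 * k * snd (\<alpha> t) * exp (t / 2) = 0" using z n1 n2 by linarith
      then have "snd (\<alpha> t) = 0" using kp by simp
      ultimately show "fst (\<alpha> t) = 1 \<and> snd (\<alpha> t) = 0" by simp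
    qed
  qed
  have Mts: "M \<tau>s = m"
  proof -
    have hm: "((\<lambda>s. exp (s / 2) / 2 * (1/2 * fst (\<xi> s) + 1/2 * snd (\<xi> s)) + exp (s / 2) * (1/2 * fst (dyn (\<alpha> s) (\<xi> s)) + 1/2 * snd (dyn (\<alpha> s) (\<xi> s))))
       has_integral (exp (T / 2) * (1/2 * fst (\<xi> T) + 1/2 * snd (\<xi> T)) - exp (\<tau>s / 2) * (1/2 * fst (\<xi> \<tau>s) + 1/2 * snd (\<xi> \<tau>s)))) {\<tau>s..T}"
      by (rule traj_prod[OF adm tr \<tau>0 \<tau>T order.refl]) (auto intro!: derivative_eq_intros continuous_intros)
    have hm2: "((\<lambda>s. exp (s / 2) * M s * (1 - fst (\<alpha> s) - snd (\<alpha> s)) / 2) has_integral (exp (T / 2) * \<mu> - k * M \<tau>s)) {\<tau>s..T}"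
      by (rule hi_eq[OF hm]) (auto simp: M_def \<mu>_def k_def dyn_def mean_def field_simps)
    have "((\<lambda>s. 0) has_integral (exp (T / 2) * \<mu> - k * M \<tau>s)) {\<tau>s..T}"
    proof (rule has_integral_ae_eq[OF hm2])
      show "AE x in lebesgue. x \<in> {\<tau>s..T} \<longrightarrow> exp (x / 2) * M x * (1 - fst (\<alpha> x) - snd (\<alpha> x)) / 2 = 0"
        using AEb AE_neq[of \<tau>s] by eventually_elim auto
    qed
    then have "exp (T / 2) * \<mu> - k * M \<tau>s = 0" using has_integral_unique[OF has_integral_0] by metis
    then have "k * (k * M \<tau>s) = k * exp (T / 2) * \<mu>" by (simp add: algebra_simps)
    also have "\<dots> = m * (k * k)" using kT kk by simp
    finally have "k * k * M \<tau>s = k * k * m" by (simp add: algebra_simps)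
    then show ?thesis using kp by simp
  qed
  have hs: "((\<lambda>s. (fst (\<alpha> s) + snd (\<alpha> s)) / 2 * M s) has_integral 0) {0..\<tau>s}"
  proof -
    have "((\<lambda>s. - (- ((fst (\<alpha> s) + snd (\<alpha> s)) / 2 * mean (\<xi> s)))) has_integral - (mean (\<xi> \<tau>s) - mean (\<xi> 0))) {0..\<tau>s}"
      by (rule has_integral_neg[OF traj_m[OF adm tr order.refl \<tau>0 \<tau>T]])
    then show ?thesis by (rule hi_eq) (use Mts M0 in \<open>auto simp: M_def\<close>)
  qed
  have AEc: "AE t in lebesgue. t \<in> {0..\<tau>s} \<longrightarrow> (fst (\<alpha> t) + snd (\<alpha> t)) / 2 * M t = 0"
    by (rule nonneg_zero_ae[OF hs]) (use ab Mpos \<tau>T in \<open>auto intro!: mult_nonneg_nonneg simp: less_imp_le\<close>)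
  have "AE t in lebesgue. (t \<in> {0..<\<tau>s} \<longrightarrow> \<alpha> t = (0, 0)) \<and> (t \<in> {\<tau>s..T} \<longrightarrow> \<alpha> t = (1, 0))"
    using AEb AEc AE_neq[of \<tau>s]
  proof eventually_elim
    case (elim t)
    show ?case
    proof (intro conjI impI)
      assume t: "t \<in> {0..<\<tau>s}"
      then have tT: "t \<in> {0..T}" using \<tau>T by auto
      have "(fst (\<alpha> t) + snd (\<alpha> t)) / 2 * M t = 0" using elim t by auto
      then have "fst (\<alpha> t) + snd (\<alpha> t) = 0" using Mpos[OF tT] by simp
      then show "\<alpha> t = (0, 0)" using ab[OF tT] by (auto simp: prod_eq_iff)
    next
      assume t: "t \<in> {\<tau>s..T}"
      then show "\<alpha> t = (1, 0)" using elim by (auto simp: prod_eq_iff)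
    qed
  qed
  then show ?thesis using \<tau>0 \<tau>lt by auto
qed



theorem theorem3:
  fixes T :: real and x0 :: "real \<times> real"
    and \<alpha> \<xi> :: "real \<Rightarrow> real \<times> real"
  assumes "T > 0"
    and "mean x0 > 0"
    and "fst x0 > snd x0"
    and opt: "optimal T x0 \<alpha> \<xi>"
    and ord: "\<forall>t\<in>{0..T}. fst (\<xi> t) \<ge> snd (\<xi> t)"
  defines "t0 \<equiv> 2 * ln (fst x0 / (2 * mean x0))"
  shows "(snd x0 > 0 \<longrightarrow> (AE t in lebesgue. t \<in> {0..T} \<longrightarrow> \<alpha> t = (1, 1)))
       \<and> (snd x0 \<le> 0 \<and> T \<ge> t0 \<longrightarrow>
            snd (\<xi> T) = 0
          \<and> (AE t in lebesgue. t \<in> {0..T} \<longrightarrow> fst (\<alpha> t) = 1)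
          \<and> (\<exists>\<eta>. optimal T x0 (\<lambda>t. if t < t0 then (1, 0) else (1, 1)) \<eta>)
          \<and> (\<forall>tb\<in>{0..<T}. snd (\<xi> tb) = 0 \<longrightarrow> (\<forall>t\<in>{tb..T}. snd (\<xi> t) = 0)))
       \<and> (snd x0 \<le> 0 \<and> T < t0 \<longrightarrow>
            (\<exists>ts\<in>{0..<T}. AE t in lebesgue.
                 (t \<in> {0..<ts} \<longrightarrow> \<alpha> t = (0, 0)) \<and> (t \<in> {ts..T} \<longrightarrow> \<alpha> t = (1, 0))))"
proof -
  have P1: "snd x0 > 0 \<longrightarrow> (AE t in lebesgue. t \<in> {0..T} \<longrightarrow> \<alpha> t = (1, 1))"
    using part_i[OF assms(1) assms(2) opt _ assms(3)] by blast
  have P2: "snd x0 \<le> 0 \<and> T \<ge> t0 \<longrightarrow>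
            snd (\<xi> T) = 0
          \<and> (AE t in lebesgue. t \<in> {0..T} \<longrightarrow> fst (\<alpha> t) = 1)
          \<and> (\<exists>\<eta>. optimal T x0 (\<lambda>t. if t < t0 then (1, 0) else (1, 1)) \<eta>)
          \<and> (\<forall>tb\<in>{0..<T}. snd (\<xi> tb) = 0 \<longrightarrow> (\<forall>t\<in>{tb..T}. snd (\<xi> t) = 0))"
    using part_ii[OF assms(1) assms(2) assms(3) opt _ meta_eq_to_obj_eq[OF t0_def]] by blast
  have P3: "snd x0 \<le> 0 \<and> T < t0 \<longrightarrow>
            (\<exists>ts\<in>{0..<T}. AE t in lebesgue.
                 (t \<in> {0..<ts} \<longrightarrow> \<alpha> t = (0, 0)) \<and> (t \<in> {ts..T} \<longrightarrow> \<alpha> t = (1, 0)))"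
    using part_iii[OF assms(1) assms(2) assms(3) opt ord _ meta_eq_to_obj_eq[OF t0_def]] by blast
  show ?thesis using P1 P2 P3 by blast
qed

end
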